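(* Let $\rho:\mathcal{F}\to[\Psi]^\omega$ be a partition regular function. Then $\rho$ is $P^+$ if and only if it is both $P^{\,|}$ and $P^-$.
   Context: Let $\Omega,\Psi$ be countably infinite sets and $\mathcal{F}\subseteq[\Omega]^\omega$ a nonempty family of infinite subsets of $\Omega$ with $A\setminus K\in\mathcal{F}$ for all $A\in\mathcal{F}$ and finite $K\subseteq\Omega$. A function $\rho:\mathcal{F}\to[\Psi]^\omega$ is partition regular if: (M) $E\subseteq F$ in $\mathcal{F}$ implies $\rho(E)\subseteq\rho(F)$; (R) for every $F\in\mathcal{F}$ and $A,B\subseteq\Psi$ with $\rho(F)=A\cup B$ there is $E\in\mathcal{F}$ with $\rho(E)\subseteq A$ or $\rho(E)\subseteq B$; (S) for every $F\in\mathcal{F}$ there is $E\subseteq F$, $E\in\mathcal{F}$, such that for every $a\in\rho(E)$ there is a finite $K\subseteq\Omega$ with $a\notin\rho(E\setminus K)$. $\mathcal{I}_\rho=\{S\subseteq\Psi:\forall F\in\mathcal{F}\ \rho(F)\not\subseteq S\}$ and $\mathcal{I}_\rho^+=\mathcal{P}(\Psi)\setminus\mathcal{I}_\rho$. For $F\in\mathcal{F}$ and $B\subseteq\Psi$ write $\rho(F)\subseteq^\rho B$ if there is a finite $K\subseteq\Omega$ with $\rho(F\setminus K)\subseteq B$ (a relation between $F$ and $B$). $\rho$ is $P^+$ if for every $\subseteq$-decreasing sequence $(A_n)_{n\in\omega}$ of sets in $\mathcal{I}_\rho^+$ there is $F\in\mathcal{F}$ with $\rho(F)\subseteq^\rho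 A_n$ for all $n$; $\rho$ is $P^-$ if the same holds for every such sequence additionally satisfying $A_n\setminus A_{n+1}\in\mathcal{I}_\rho$ for all $n$; $\rho$ is $P^{\,|}$ if the same holds for every such sequence additionally satisfying $A_n\setminus A_{n+1}\in\mathcal{I}_\rho^+$ for all $n$. *)

theory Defs
  imports Main "HOL-Library.Countable_Set"
begin

definition pr_setting :: "'a set \<Rightarrow> 'b set \<Rightarrow> 'a set set \<Rightarrow> ('a set \<Rightarrow> 'b set) \<Rightarrow> bool" where
  "pr_setting Omega Psi FF rho \<longleftrightarrow>
     countable Omega \<and> infinite Omega \<and> countable Psi \<and> infinite Psi \<and>
     FF \<noteq> {} \<and> (\<forall>A\<in>FF. A \<subseteq> Omega \<and> infinite A) \<and>
     (\<forall>A\<in>FF. \<forall>K. finite K \<and> K \<subseteq> Omega \<longrightarrow> A - K \<in> FF) \<and>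
     (\<forall>A\<in>FF. rho A \<subseteq> Psi \<and> infinite (rho A))"

definition partition_regular :: "'a set \<Rightarrow> 'b set \<Rightarrow> 'a set set \<Rightarrow> ('a set \<Rightarrow> 'b set) \<Rightarrow> bool" where
  "partition_regular Omega Psi FF rho \<longleftrightarrow>
     pr_setting Omega Psi FF rho \<and>
     (\<forall>E\<in>FF. \<forall>F\<in>FF. E \<subseteq> F \<longrightarrow> rho E \<subseteq> rho F) \<and>
     (\<forall>F\<in>FF. \<forall>A B. A \<subseteq> Psi \<and> B \<subseteq> Psi \<and> rho F = A \<union> B \<longrightarrow>
        (\<exists>E\<in>FF. rho E \<subseteq> A \<or> rho E \<subseteq> B)) \<and>
     (\<forall>F\<in>FF. \<exists>E\<in>FF. E \<subseteq> F \<and>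
        (\<forall>a\<in>rho E. \<exists>K. finite K \<and> K \<subseteq> Omega \<and> a \<notin> rho (E - K)))"

definition I_rho :: "'b set \<Rightarrow> 'a set set \<Rightarrow> ('a set \<Rightarrow> 'b set) \<Rightarrow> 'b set set" where
  "I_rho Psi FF rho = {S. S \<subseteq> Psi \<and> (\<forall>F\<in>FF. \<not> rho F \<subseteq> S)}"

definition I_rho_plus :: "'b set \<Rightarrow> 'a set set \<Rightarrow> ('a set \<Rightarrow> 'b set) \<Rightarrow> 'b set set" where
  "I_rho_plus Psi FF rho = Pow Psi - I_rho Psi FF rho"

definition subseteq_rho :: "'a set \<Rightarrow> ('a set \<Rightarrow> 'b set) \<Rightarrow> 'a set \<Rightarrow> 'b set \<Rightarrow> bool" where
  "subseteq_rho Omega rho F B \<longleftrightarrow> (\<exists>K. finite K \<and> K \<subseteq> Omega \<and> rho (F - K) \<subseteq> B)"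

definition is_P_plus :: "'a set \<Rightarrow> 'b set \<Rightarrow> 'a set set \<Rightarrow> ('a set \<Rightarrow> 'b set) \<Rightarrow> bool" where
  "is_P_plus Omega Psi FF rho \<longleftrightarrow>
     (\<forall>A :: nat \<Rightarrow> 'b set.
        (\<forall>n. A n \<in> I_rho_plus Psi FF rho) \<and> (\<forall>n. A (Suc n) \<subseteq> A n) \<longrightarrow>
        (\<exists>F\<in>FF. \<forall>n. subseteq_rho Omega rho F (A n)))"

definition is_P_minus :: "'a set \<Rightarrow> 'b set \<Rightarrow> 'a set set \<Rightarrow> ('a set \<Rightarrow> 'b set) \<Rightarrow> bool" where
  "is_P_minus Omega Psi FF rho \<longleftrightarrow>
     (\<forall>A :: nat \<Rightarrow> 'b set.
        (\<forall>n. A n \<in> I_rho_plus Psi FF rho) \<and> (\<forall>n. A (Suc n) \<subseteq> A n) \<and>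
        (\<forall>n. A n - A (Suc n) \<in> I_rho Psi FF rho) \<longrightarrow>
        (\<exists>F\<in>FF. \<forall>n. subseteq_rho Omega rho F (A n)))"

definition is_P_bar :: "'a set \<Rightarrow> 'b set \<Rightarrow> 'a set set \<Rightarrow> ('a set \<Rightarrow> 'b set) \<Rightarrow> bool" where
  "is_P_bar Omega Psi FF rho \<longleftrightarrow>
     (\<forall>A :: nat \<Rightarrow> 'b set.
        (\<forall>n. A n \<in> I_rho_plus Psi FF rho) \<and> (\<forall>n. A (Suc n) \<subseteq> A n) \<and>
        (\<forall>n. A n - A (Suc n) \<in> I_rho_plus Psi FF rho) \<longrightarrow>
        (\<exists>F\<in>FF. \<forall>n. subseteq_rho Omega rho F (A n)))"

end

theory Submission
  imports Defs
begin

lemma plus_mono: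
  assumes "S \<in> I_rho_plus Psi FF rho" "S \<subseteq> T" "T \<subseteq> Psi"
  shows "T \<in> I_rho_plus Psi FF rho"
  using assms unfolding I_rho_plus_def I_rho_def by blast

lemma sub_mono:
  assumes "subseteq_rho Omega rho F S" "S \<subseteq> T"
  shows "subseteq_rho Omega rho F T"
  using assms unfolding subseteq_rho_def by blast

lemma plus_sub: "S \<in> I_rho_plus Psi FF rho \<Longrightarrow> S \<subseteq> Psi"
  unfolding I_rho_plus_def by blast

theorem proposition3p1:
  fixes Omega :: "'a set" and Psi :: "'b set" and FF :: "'a set set"
    and rho :: "'a set \<Rightarrow> 'b set"
  assumes "partition_regular Omega Psi FF rho"
  shows "is_P_plus Omega Psi FF rho \<longleftrightarrow>
           (is_P_bar Omega Psi FF rho \<and> is_P_minus Omega Psi FF rho)"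
proof
  assume "is_P_plus Omega Psi FF rho"
  then show "is_P_bar Omega Psi FF rho \<and> is_P_minus Omega Psi FF rho"
    unfolding is_P_plus_def is_P_bar_def is_P_minus_def by blast
next
  assume H: "is_P_bar Omega Psi FF rho \<and> is_P_minus Omega Psi FF rho"
  show "is_P_plus Omega Psi FF rho"
    unfolding is_P_plus_def
  proof (intro allI impI)
    fix A :: "nat \<Rightarrow> 'b set"
    assume "(\<forall>n. A n \<in> I_rho_plus Psi FF rho) \<and> (\<forall>n. A (Suc n) \<subseteq> A n)"
    then have pos: "\<And>n. A n \<in> I_rho_plus Psi FF rho" and dec: "\<And>n. A (Suc n) \<subseteq> A n" by auto
    have anti: "\<And>m n. m \<le> n \<Longrightarrow> A n \<subseteq> A m"
      using lift_Suc_antimono_le[of A] dec by blast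
    have sub: "\<And>n. A n \<subseteq> Psi" using pos plus_sub by blast
    show "\<exists>F\<in>FF. \<forall>n. subseteq_rho Omega rho F (A n)"
    proof (cases "\<exists>m. \<forall>n\<ge>m. A n - A (Suc n) \<in> I_rho Psi FF rho")
      case True
      then obtain m where m: "\<And>n. n \<ge> m \<Longrightarrow> A n - A (Suc n) \<in> I_rho Psi FF rho" by blast
      define B where "B n = A (m + n)" for n
      have "(\<forall>n. B n \<in> I_rho_plus Psi FF rho) \<and> (\<forall>n. B (Suc n) \<subseteq> B n) \<and>
        (\<forall>n. B n - B (Suc n) \<in> I_rho Psi FF rho)"
        unfolding B_def using pos dec m by simp
      then obtain F where F: "F \<in> FF" "\<And>n. subseteq_rho Omega rho F (B n)"
        using H unfolding is_P_minus_def by blast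
      have "subseteq_rho Omega rho F (A n)" for n
      proof -
        have "B n \<subseteq> A n" unfolding B_def using anti by simp
        then show ?thesis using F(2) sub_mono by blast
      qed
      then show ?thesis using F(1) by blast
    next
      case False
      then have "\<forall>m. \<exists>n\<ge>m. A n - A (Suc n) \<notin> I_rho Psi FF rho" by blast
      then obtain f where f: "\<And>m. f m \<ge> m" "\<And>m. A (f m) - A (Suc (f m)) \<notin> I_rho Psi FF rho"
        by metis
      define g where "g k = rec_nat (f 0) (\<lambda>_ x. f (Suc x)) k" for k
      have g0: "g 0 = f 0" and gS: "\<And>k. g (Suc k) = f (Suc (g k))" unfolding g_def by simp_all
      have gge: "g k \<ge> k" for k
        by (induction k) (use f(1) g0 gS in \<open>auto intro: le_trans Suc_le_mono[THEN iffD2]\<close>)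
      define B where "B k = A (g k)" for k
      have posd: "B k - B (Suc k) \<in> I_rho_plus Psi FF rho" for k
      proof -
        have ni: "A (g k) - A (Suc (g k)) \<notin> I_rho Psi FF rho"
          by (cases k) (simp_all add: g0 gS f(2))
        have "A (g k) - A (Suc (g k)) \<subseteq> Psi" using sub by blast
        then have "A (g k) - A (Suc (g k)) \<in> I_rho_plus Psi FF rho"
          using ni unfolding I_rho_plus_def by blast
        moreover have "A (g (Suc k)) \<subseteq> A (Suc (g k))" using anti f(1) gS by simp
        ultimately show ?thesis unfolding B_def
          using plus_mono[of "A (g k) - A (Suc (g k))" Psi FF rho "A (g k) - A (g (Suc k))"] sub
          by blast
      qed
      have decB: "B (Suc k) \<subseteq> B k" for k
        unfolding B_def using anti f(1) gS by (simp add: Suc_leD)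
      have "(\<forall>n. B n \<in> I_rho_plus Psi FF rho) \<and> (\<forall>n. B (Suc n) \<subseteq> B n) \<and>
        (\<forall>n. B n - B (Suc n) \<in> I_rho_plus Psi FF rho)"
        unfolding B_def using pos decB posd B_def by simp
      then obtain F where F: "F \<in> FF" "\<And>n. subseteq_rho Omega rho F (B n)"
        using H unfolding is_P_bar_def by blast
      have "subseteq_rho Omega rho F (A n)" for n
      proof -
        have "B n \<subseteq> A n" unfolding B_def using anti gge by simp
        then show ?thesis using F(2) sub_mono by blast
      qed
      then show ?thesis using F(1) by blast
    qed
  qed
qed

end
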